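(* Let ${\cal C}$ be a semi-degenerate congruence-modular variety and $A\in{\cal C}$ a semiprime algebra. Then for every $\Omega\subseteq{\rm Con}(A)$ there exists $\theta\in{\rm Con}(A)$ such that ${\rm Ann}_{{\rm Con}(A)}(\Omega)={\rm Ann}_{{\rm Con}(A)}(\theta)$; that is, $\{{\rm Ann}_{{\rm Con}(A)}(\Omega)\mid\Omega\subseteq{\rm Con}(A)\}=\{{\rm Ann}_{{\rm Con}(A)}(\theta)\mid\theta\in{\rm Con}(A)\}$.
   Context: ${\cal C}$ semi-degenerate: no nontrivial member has a one-element subalgebra. ${\rm Con}(A)$: congruence lattice with bounds $\Delta_A,\nabla_A=A^2$; $[\cdot,\cdot]_A$: modular commutator. A congruence $\phi\ne\nabla_A$ is prime if $[\theta,\zeta]_A\subseteq\phi$ implies $\theta\subseteq\phi$ or $\zeta\subseteq\phi$. $\rho_A(\theta)$: intersection of all prime congruences containing $\theta$. $A$ semiprime: $\rho_A(\Delta_A)=\Delta_A$. In the lattice ${\rm Con}(A)$, ${\rm Ann}_{{\rm Con}(A)}(\Omega)=\{\zeta\in{\rm Con}(A)\mid\zeta\cap\omega=\Delta_A\ \forall\omega\in\Omega\}$ and ${\rm Ann}_{{\rm Con}(A)}(\theta)={\rm Ann}_{{\rm Con}(A)}(\{\theta\})$. *)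

theory Defs
  imports Main
begin

text \<open>A signature is given by a type of operation symbols 'f together with an
arity function.\<close>

record ('a, 'f) alg =
  carrier :: "'a set"
  ops :: "'f \<Rightarrow> 'a list \<Rightarrow> 'a"

definition is_alg :: "('f \<Rightarrow> nat) \<Rightarrow> ('a, 'f) alg \<Rightarrow> bool" where
  "is_alg ar A \<longleftrightarrow> carrier A \<noteq> {} \<and>
     (\<forall>f xs. length xs = ar f \<and> set xs \<subseteq> carrier A \<longrightarrow> ops A f xs \<in> carrier A)"

datatype ('f, 'v) trm = Var 'v | App 'f "('f, 'v) trm list"

fun wf_trm :: "('f \<Rightarrow> nat) \<Rightarrow> ('f, 'v) trm \<Rightarrow> bool" where
  "wf_trm ar (Var v) = True"
| "wf_trm ar (App f ts) = (length ts = ar f \<and> list_all (wf_trm ar) ts)"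

fun teval :: "('a, 'f) alg \<Rightarrow> ('v \<Rightarrow> 'a) \<Rightarrow> ('f, 'v) trm \<Rightarrow> 'a" where
  "teval A \<rho> (Var v) = \<rho> v"
| "teval A \<rho> (App f ts) = ops A f (map (teval A \<rho>) ts)"

definition satisfies :: "('a, 'f) alg \<Rightarrow> (('f, nat) trm \<times> ('f, nat) trm) set \<Rightarrow> bool" where
  "satisfies A E \<longleftrightarrow> (\<forall>(s, t) \<in> E. \<forall>\<rho>. range \<rho> \<subseteq> carrier A \<longrightarrow> teval A \<rho> s = teval A \<rho> t)"

definition in_var :: "('f \<Rightarrow> nat) \<Rightarrow> (('f, nat) trm \<times> ('f, nat) trm) set \<Rightarrow> ('a, 'f) alg \<Rightarrow> bool" where
  "in_var ar E A \<longleftrightarrow> is_alg ar A \<and> satisfies A E"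

definition is_cong :: "('f \<Rightarrow> nat) \<Rightarrow> ('a, 'f) alg \<Rightarrow> ('a \<times> 'a) set \<Rightarrow> bool" where
  "is_cong ar A \<theta> \<longleftrightarrow> \<theta> \<subseteq> carrier A \<times> carrier A \<and> equiv (carrier A) \<theta> \<and>
     (\<forall>f xs ys. length xs = ar f \<and> length ys = ar f \<and> list_all2 (\<lambda>x y. (x, y) \<in> \<theta>) xs ys
        \<longrightarrow> (ops A f xs, ops A f ys) \<in> \<theta>)"

definition Con :: "('f \<Rightarrow> nat) \<Rightarrow> ('a, 'f) alg \<Rightarrow> ('a \<times> 'a) set set" where
  "Con ar A = {\<theta>. is_cong ar A \<theta>}"

definition Delta :: "('a, 'f) alg \<Rightarrow> ('a \<times> 'a) set" where
  "Delta A = Id_on (carrier A)"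

definition Nabla :: "('a, 'f) alg \<Rightarrow> ('a \<times> 'a) set" where
  "Nabla A = carrier A \<times> carrier A"

definition cjoin :: "('f \<Rightarrow> nat) \<Rightarrow> ('a, 'f) alg \<Rightarrow> ('a \<times> 'a) set \<Rightarrow> ('a \<times> 'a) set \<Rightarrow> ('a \<times> 'a) set" where
  "cjoin ar A \<theta> \<zeta> = \<Inter>{\<phi> \<in> Con ar A. \<theta> \<union> \<zeta> \<subseteq> \<phi>}"

definition con_modular :: "('f \<Rightarrow> nat) \<Rightarrow> ('a, 'f) alg \<Rightarrow> bool" where
  "con_modular ar A \<longleftrightarrow> (\<forall>\<alpha>\<in>Con ar A. \<forall>\<beta>\<in>Con ar A. \<forall>\<gamma>\<in>Con ar A.
      \<alpha> \<subseteq> \<gamma> \<longrightarrow> cjoin ar A \<alpha> (\<beta> \<inter> \<gamma>) = cjoin ar A \<alpha> \<beta> \<inter> \<gamma>)"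

text \<open>Properties of the variety defined by (ar, E), restricted to members whose
universe lies in the type 'b. When 'b is at least as large as the type of terms
('f, nat) trm, these are equivalent to the properties of the whole variety
(Day's theorem for modularity, 4-generated free algebra; 2-generated subalgebras
for semi-degeneracy).\<close>

definition cm_variety_on ::
  "'b itself \<Rightarrow> ('f \<Rightarrow> nat) \<Rightarrow> (('f, nat) trm \<times> ('f, nat) trm) set \<Rightarrow> bool" where
  "cm_variety_on _ ar E \<longleftrightarrow> (\<forall>B :: ('b, 'f) alg. in_var ar E B \<longrightarrow> con_modular ar B)"

definition one_elem_subalg :: "('f \<Rightarrow> nat) \<Rightarrow> ('a, 'f) alg \<Rightarrow> 'a \<Rightarrow> bool" where
  "one_elem_subalg ar A e \<longleftrightarrow> e \<in> carrier A \<and> (\<forall>f. ops A f (replicate (ar f) e) = e)"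

definition semi_degenerate_on ::
  "'b itself \<Rightarrow> ('f \<Rightarrow> nat) \<Rightarrow> (('f, nat) trm \<times> ('f, nat) trm) set \<Rightarrow> bool" where
  "semi_degenerate_on _ ar E \<longleftrightarrow> (\<forall>B :: ('b, 'f) alg.
      in_var ar E B \<and> (\<exists>x\<in>carrier B. \<exists>y\<in>carrier B. x \<noteq> y) \<longrightarrow> \<not> (\<exists>e. one_elem_subalg ar B e))"

text \<open>C(alpha, beta; delta): for every term t(x1..,y1..) and tuples a,b (pairwise
alpha-related) and c,d (pairwise beta-related):
t(a,c) delta t(a,d) implies t(b,c) delta t(b,d).\<close>

definition centralizes ::
  "('f \<Rightarrow> nat) \<Rightarrow> ('a, 'f) alg \<Rightarrow> ('a \<times> 'a) set \<Rightarrow> ('a \<times> 'a) set \<Rightarrow> ('a \<times> 'a) set \<Rightarrow> bool" where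
  "centralizes ar A \<alpha> \<beta> \<delta> \<longleftrightarrow>
    (\<forall>(t :: ('f, nat + nat) trm) (a :: nat \<Rightarrow> 'a) b c d.
       wf_trm ar t \<and> (\<forall>i. (a i, b i) \<in> \<alpha>) \<and> (\<forall>j. (c j, d j) \<in> \<beta>) \<and>
       (teval A (case_sum a c) t, teval A (case_sum a d) t) \<in> \<delta>
       \<longrightarrow> (teval A (case_sum b c) t, teval A (case_sum b d) t) \<in> \<delta>)"

definition comm :: "('f \<Rightarrow> nat) \<Rightarrow> ('a, 'f) alg \<Rightarrow> ('a \<times> 'a) set \<Rightarrow> ('a \<times> 'a) set \<Rightarrow> ('a \<times> 'a) set" where
  "comm ar A \<alpha> \<beta> = \<Inter>{\<delta> \<in> Con ar A. centralizes ar A \<alpha> \<beta> \<delta>}"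

definition prime_cong :: "('f \<Rightarrow> nat) \<Rightarrow> ('a, 'f) alg \<Rightarrow> ('a \<times> 'a) set \<Rightarrow> bool" where
  "prime_cong ar A \<phi> \<longleftrightarrow> \<phi> \<in> Con ar A \<and> \<phi> \<noteq> Nabla A \<and>
     (\<forall>\<theta>\<in>Con ar A. \<forall>\<zeta>\<in>Con ar A. comm ar A \<theta> \<zeta> \<subseteq> \<phi> \<longrightarrow> \<theta> \<subseteq> \<phi> \<or> \<zeta> \<subseteq> \<phi>)"

text \<open>Intersection taken inside Con(A); the empty intersection is Nabla.\<close>

definition rad :: "('f \<Rightarrow> nat) \<Rightarrow> ('a, 'f) alg \<Rightarrow> ('a \<times> 'a) set \<Rightarrow> ('a \<times> 'a) set" where
  "rad ar A \<theta> = Nabla A \<inter> \<Inter>{\<phi>. prime_cong ar A \<phi> \<and> \<theta> \<subseteq> \<phi>}"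

definition semiprime :: "('f \<Rightarrow> nat) \<Rightarrow> ('a, 'f) alg \<Rightarrow> bool" where
  "semiprime ar A \<longleftrightarrow> rad ar A (Delta A) = Delta A"

definition Ann :: "('f \<Rightarrow> nat) \<Rightarrow> ('a, 'f) alg \<Rightarrow> ('a \<times> 'a) set set \<Rightarrow> ('a \<times> 'a) set set" where
  "Ann ar A \<Omega> = {\<zeta> \<in> Con ar A. \<forall>\<omega>\<in>\<Omega>. \<zeta> \<inter> \<omega> = Delta A}"

end

theory Submission
  imports Defs
begin

lemma cong_teval:
  assumes th: "is_cong ar A \<theta>"
  shows "wf_trm ar t \<Longrightarrow> (\<forall>v. (\<rho> v, \<sigma> v) \<in> \<theta>) \<Longrightarrow> (teval A \<rho> t, teval A \<sigma> t) \<in> \<theta>"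
proof (induction t)
  case (Var v) then show ?case by simp
next
  case (App f ts)
  have "list_all2 (\<lambda>x y. (x, y) \<in> \<theta>) (map (teval A \<rho>) ts) (map (teval A \<sigma>) ts)"
    using App.IH App.prems by (auto simp: list_all_iff intro!: list_all2_all_nthI)
  moreover have "length ts = ar f" using App.prems by simp
  ultimately show ?case using th unfolding is_cong_def by simp
qed

lemma cong_props:
  assumes "\<theta> \<in> Con ar A"
  shows "\<theta> \<subseteq> carrier A \<times> carrier A" "equiv (carrier A) \<theta>" "is_cong ar A \<theta>"
  using assms by (auto simp: Con_def is_cong_def)

lemma comm_sub1:
  fixes ar :: "'f \<Rightarrow> nat" and A :: "('a, 'f) alg"
  assumes z: "\<zeta> \<in> Con ar A" and w: "\<omega> \<in> Con ar A"
  shows "comm ar A \<zeta> \<omega> \<subseteq> \<zeta>"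
proof -
  have eq: "equiv (carrier A) \<zeta>" and sub: "\<zeta> \<subseteq> carrier A \<times> carrier A"
    and wsub: "\<omega> \<subseteq> carrier A \<times> carrier A" and ic: "is_cong ar A \<zeta>"
    using cong_props[OF z] cong_props[OF w] by auto
  have "centralizes ar A \<zeta> \<omega> \<zeta>"
    unfolding centralizes_def
  proof (intro allI impI, elim conjE)
    fix t :: "('f, nat + nat) trm" and a b c d :: "nat \<Rightarrow> 'a"
    assume wt: "wf_trm ar t" and ab: "\<forall>i. (a i, b i) \<in> \<zeta>" and cd: "\<forall>j. (c j, d j) \<in> \<omega>"
      and h: "(teval A (case_sum a c) t, teval A (case_sum a d) t) \<in> \<zeta>"
    have cc: "c j \<in> carrier A" "d j \<in> carrier A" for j using cd wsub by auto
    have refl: "x \<in> carrier A \<Longrightarrow> (x, x) \<in> \<zeta>" for x using eq by (auto simp: equiv_def refl_on_def)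
    have symm: "(x, y) \<in> \<zeta> \<Longrightarrow> (y, x) \<in> \<zeta>" for x y using eq by (auto simp: equiv_def sym_def)
    have trans: "(x, y) \<in> \<zeta> \<Longrightarrow> (y, z) \<in> \<zeta> \<Longrightarrow> (x, z) \<in> \<zeta>" for x y z
      using eq unfolding equiv_def trans_def by blast
    have 1: "(teval A (case_sum b c) t, teval A (case_sum a c) t) \<in> \<zeta>"
      by (rule cong_teval[OF ic wt]) (auto split: sum.split simp: ab symm refl cc)
    have 2: "(teval A (case_sum a d) t, teval A (case_sum b d) t) \<in> \<zeta>"
      by (rule cong_teval[OF ic wt]) (auto split: sum.split simp: ab refl cc)
    show "(teval A (case_sum b c) t, teval A (case_sum b d) t) \<in> \<zeta>"
      using trans[OF trans[OF 1 h] 2] .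
  qed
  then show ?thesis using z unfolding comm_def by blast
qed

lemma comm_sub2:
  fixes ar :: "'f \<Rightarrow> nat" and A :: "('a, 'f) alg"
  assumes z: "\<zeta> \<in> Con ar A" and w: "\<omega> \<in> Con ar A"
  shows "comm ar A \<zeta> \<omega> \<subseteq> \<omega>"
proof -
  have eq: "equiv (carrier A) \<omega>" and sub: "\<zeta> \<subseteq> carrier A \<times> carrier A"
    and ic: "is_cong ar A \<omega>"
    using cong_props[OF z] cong_props[OF w] by auto
  have "centralizes ar A \<zeta> \<omega> \<omega>"
    unfolding centralizes_def
  proof (intro allI impI, elim conjE)
    fix t :: "('f, nat + nat) trm" and a b c d :: "nat \<Rightarrow> 'a"
    assume wt: "wf_trm ar t" and ab: "\<forall>i. (a i, b i) \<in> \<zeta>" and cd: "\<forall>j. (c j, d j) \<in> \<omega>"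
    have bc: "b i \<in> carrier A" for i using ab sub by auto
    have refl: "x \<in> carrier A \<Longrightarrow> (x, x) \<in> \<omega>" for x using eq by (auto simp: equiv_def refl_on_def)
    show "(teval A (case_sum b c) t, teval A (case_sum b d) t) \<in> \<omega>"
      by (rule cong_teval[OF ic wt]) (auto split: sum.split simp: cd refl bc)
  qed
  then show ?thesis using w unfolding comm_def by blast
qed

lemma Nabla_Con:
  assumes alg: "is_alg ar A" shows "Nabla A \<in> Con ar A"
proof -
  have "ops A f xs \<in> carrier A \<and> ops A f ys \<in> carrier A"
    if l: "length xs = ar f" "length ys = ar f" and r: "list_all2 (\<lambda>x y. (x, y) \<in> carrier A \<times> carrier A) xs ys"
    for f xs ys
  proof -
    have "set xs \<subseteq> carrier A" "set ys \<subseteq> carrier A"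
      using r by (auto simp: list_all2_conv_all_nth in_set_conv_nth)
    then show ?thesis using alg l unfolding is_alg_def by blast
  qed
  then show ?thesis unfolding Con_def is_cong_def Nabla_def
    by (auto simp: equiv_def refl_on_def sym_def trans_def)
qed

lemma Inter_Con:
  assumes "S \<subseteq> Con ar A" "S \<noteq> {}"
  shows "\<Inter>S \<in> Con ar A"
proof -
  obtain s where s: "s \<in> S" using assms by blast
  have "s \<subseteq> carrier A \<times> carrier A" using s assms cong_props(1) by blast
  then have sub: "\<Inter>S \<subseteq> carrier A \<times> carrier A" using s by blast
  moreover have "equiv (carrier A) (\<Inter>S)"
  proof (rule equivI)
    show "\<Inter>S \<subseteq> carrier A \<times> carrier A" by (rule sub)
    have e: "\<And>\<phi>. \<phi> \<in> S \<Longrightarrow> equiv (carrier A) \<phi>" using assms cong_props(2) by blast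
    show "refl_on (carrier A) (\<Inter>S)" using e s \<open>\<Inter>S \<subseteq> carrier A \<times> carrier A\<close>
      unfolding refl_on_def equiv_def by blast
    show "sym (\<Inter>S)" using e unfolding sym_def equiv_def by blast
    show "trans (\<Inter>S)" using e unfolding trans_def equiv_def by blast
  qed
  moreover have "\<forall>f xs ys. length xs = ar f \<and> length ys = ar f \<and> list_all2 (\<lambda>x y. (x, y) \<in> \<Inter>S) xs ys
        \<longrightarrow> (ops A f xs, ops A f ys) \<in> \<Inter>S"
  proof (intro allI impI, elim conjE)
    fix f xs ys assume l: "length xs = ar f" "length ys = ar f" and r: "list_all2 (\<lambda>x y. (x, y) \<in> \<Inter>S) xs ys"
    show "(ops A f xs, ops A f ys) \<in> \<Inter>S"
    proof
      fix \<phi> assume p: "\<phi> \<in> S"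
      have "list_all2 (\<lambda>x y. (x, y) \<in> \<phi>) xs ys" using r p by (auto elim: list_all2_mono)
      then show "(ops A f xs, ops A f ys) \<in> \<phi>" using l p assms unfolding Con_def is_cong_def by blast
    qed
  qed
  ultimately show ?thesis unfolding Con_def is_cong_def by blast
qed

lemma Delta_sub: "\<phi> \<in> Con ar A \<Longrightarrow> Delta A \<subseteq> \<phi>"
  unfolding Delta_def Con_def is_cong_def equiv_def refl_on_def by auto

lemma main_part:
  assumes alg: "is_alg ar A" and sp: "semiprime ar A" and O: "\<Omega> \<subseteq> Con ar A"
  shows "\<exists>\<theta> \<in> Con ar A. Ann ar A \<Omega> = Ann ar A {\<theta>}"
proof -
  define \<theta> where "\<theta> = \<Inter>{\<phi> \<in> Con ar A. \<Union>\<Omega> \<subseteq> \<phi>}"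
  have N: "Nabla A \<in> Con ar A" using Nabla_Con[OF alg] .
  have NO: "\<Union>\<Omega> \<subseteq> Nabla A" using O cong_props(1) unfolding Nabla_def by blast
  have thC: "\<theta> \<in> Con ar A" unfolding \<theta>_def by (rule Inter_Con) (use N NO in auto)
  have wt: "\<omega> \<subseteq> \<theta>" if "\<omega> \<in> \<Omega>" for \<omega> using that unfolding \<theta>_def by blast
  have Ann_eq: "Ann ar A \<Omega> = Ann ar A {\<theta>}"
  proof
    show "Ann ar A \<Omega> \<subseteq> Ann ar A {\<theta>}"
    proof
      fix \<zeta> assume z: "\<zeta> \<in> Ann ar A \<Omega>"
      then have zC: "\<zeta> \<in> Con ar A" and zO: "\<forall>\<omega>\<in>\<Omega>. \<zeta> \<inter> \<omega> = Delta A" by (auto simp: Ann_def)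
      have "\<zeta> \<inter> \<theta> \<subseteq> rad ar A (Delta A)"
        unfolding rad_def
      proof
        fix p assume p: "p \<in> \<zeta> \<inter> \<theta>"
        have "p \<in> Nabla A" using p cong_props(1)[OF zC] unfolding Nabla_def by blast
        moreover have "p \<in> \<phi>" if pr: "prime_cong ar A \<phi>" for \<phi>
        proof (cases "\<zeta> \<subseteq> \<phi>")
          case True then show ?thesis using p by blast
        next
          case False
          have phC: "\<phi> \<in> Con ar A" using pr by (simp add: prime_cong_def)
          have "\<omega> \<subseteq> \<phi>" if w: "\<omega> \<in> \<Omega>" for \<omega>
          proof -
            have wC: "\<omega> \<in> Con ar A" using w O by blast
            have "comm ar A \<zeta> \<omega> \<subseteq> \<zeta> \<inter> \<omega>" using comm_sub1[OF zC wC] comm_sub2[OF zC wC] by blast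
            also have "\<dots> \<subseteq> \<phi>" using zO w Delta_sub[OF phC] by auto
            finally show ?thesis using pr wC zC False unfolding prime_cong_def by blast
          qed
          then have "\<theta> \<subseteq> \<phi>" unfolding \<theta>_def using phC by blast
          then show ?thesis using p by blast
        qed
        ultimately show "p \<in> Nabla A \<inter> \<Inter>{\<phi>. prime_cong ar A \<phi> \<and> Delta A \<subseteq> \<phi>}" by blast
      qed
      then have "\<zeta> \<inter> \<theta> \<subseteq> Delta A" using sp by (simp add: semiprime_def)
      moreover have "Delta A \<subseteq> \<zeta> \<inter> \<theta>" using Delta_sub[OF zC] Delta_sub[OF thC] by blast
      ultimately show "\<zeta> \<in> Ann ar A {\<theta>}" using zC by (auto simp: Ann_def)
    qed
  next
    show "Ann ar A {\<theta>} \<subseteq> Ann ar A \<Omega>"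
    proof
      fix \<zeta> assume z: "\<zeta> \<in> Ann ar A {\<theta>}"
      then have zC: "\<zeta> \<in> Con ar A" and zt: "\<zeta> \<inter> \<theta> = Delta A" by (auto simp: Ann_def)
      have "\<zeta> \<inter> \<omega> = Delta A" if w: "\<omega> \<in> \<Omega>" for \<omega>
      proof
        show "\<zeta> \<inter> \<omega> \<subseteq> Delta A" using zt wt[OF w] by blast
        show "Delta A \<subseteq> \<zeta> \<inter> \<omega>" using Delta_sub[OF zC] Delta_sub[of \<omega>] w O by blast
      qed
      then show "\<zeta> \<in> Ann ar A \<Omega>" using zC by (auto simp: Ann_def)
    qed
  qed
  show ?thesis using thC Ann_eq by blast
qed

theorem lemma2p26:
  fixes ar :: "'f \<Rightarrow> nat"
    and E :: "(('f, nat) trm \<times> ('f, nat) trm) set"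
    and A :: "('a, 'f) alg"
  assumes wfE: "\<forall>(s, t) \<in> E. wf_trm ar s \<and> wf_trm ar t"
    and big: "\<exists>g :: ('f, nat) trm \<Rightarrow> 'b. inj g"
    and cm: "cm_variety_on TYPE('b) ar E"
    and sd: "semi_degenerate_on TYPE('b) ar E"
    and A_in: "in_var ar E A"
    and sp: "semiprime ar A"
  shows "(\<forall>\<Omega> \<subseteq> Con ar A. \<exists>\<theta> \<in> Con ar A. Ann ar A \<Omega> = Ann ar A {\<theta>}) \<and>
         {Ann ar A \<Omega> | \<Omega>. \<Omega> \<subseteq> Con ar A} = {Ann ar A {\<theta>} | \<theta>. \<theta> \<in> Con ar A}"
proof -
  have alg: "is_alg ar A" using A_in by (simp add: in_var_def)
  have P: "\<forall>\<Omega> \<subseteq> Con ar A. \<exists>\<theta> \<in> Con ar A. Ann ar A \<Omega> = Ann ar A {\<theta>}"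
    using main_part[OF alg sp] by blast
  have "{Ann ar A \<Omega> | \<Omega>. \<Omega> \<subseteq> Con ar A} = {Ann ar A {\<theta>} | \<theta>. \<theta> \<in> Con ar A}"
  proof
    show "{Ann ar A \<Omega> | \<Omega>. \<Omega> \<subseteq> Con ar A} \<subseteq> {Ann ar A {\<theta>} | \<theta>. \<theta> \<in> Con ar A}"
      using P by blast
    show "{Ann ar A {\<theta>} | \<theta>. \<theta> \<in> Con ar A} \<subseteq> {Ann ar A \<Omega> | \<Omega>. \<Omega> \<subseteq> Con ar A}"
      by blast
  qed
  with P show ?thesis by blast
qed

end
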